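(* Let $n\ge0$ and $\mathbf{x}\in\mathbb{R}^{n+1}$ with $0\le\mathbf{x}_0<\dots<\mathbf{x}_n\le1$. Then $$\kappa_{M^n\to2}\big(V^n(\mathbf{x})\big)\le(n+1)^{3/2}\,\|\mathbf{w}^n\|_2.$$
   Context: $B^n_j(x)=\binom{n}{j}x^j(1-x)^{n-j}$; $V^n(\mathbf{x})$ is the Bernstein–Vandermonde matrix $V^n_{ij}(\mathbf{x})=B^n_j(\mathbf{x}_i)$. $M^n_{ij}=\int_0^1B^n_i(x)B^n_j(x)\,dx$ is the Bernstein mass matrix, $\|\mathbf{y}\|_{M^n}=\sqrt{\mathbf{y}^TM^n\mathbf{y}}$, $\|A\|_{M^n\to2}=\max_{\mathbf{y}\ne0}\|A\mathbf{y}\|_2/\|\mathbf{y}\|_{M^n}$, $\|A\|_{2\to M^n}=\max_{\mathbf{y}\ne0}\|A\mathbf{y}\|_{M^n}/\|\mathbf{y}\|_2$, and $\kappa_{M^n\to2}(A)=\|A\|_{M^n\to2}\|A^{-1}\|_{2\to M^n}$. For $0\le j\le n$, $\ell^{j,n}(x)=\prod_{i\ne j}\frac{x-\mathbf{x}_i}{\mathbf{x}_j-\mathbf{x}_i}$ is the $j$-th Lagrange polynomial for the nodes $\mathbf{x}$, and $\mathbf{w}^n\in\mathbb{R}^{n+1}$ has entries $\mathbf{w}^n_j=\|\ell^{j,n}\|_{L^2(0,1)}$. *)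

theory Defs
  imports "HOL-Analysis.Analysis" "Jordan_Normal_Form.Gauss_Jordan_Elimination"
begin

definition bernstein :: "nat \<Rightarrow> nat \<Rightarrow> real \<Rightarrow> real" where
  "bernstein n j x = real (n choose j) * x ^ j * (1 - x) ^ (n - j)"

definition bern_vandermonde :: "nat \<Rightarrow> real vec \<Rightarrow> real mat" where
  "bern_vandermonde n x = mat (n+1) (n+1) (\<lambda>(i,j). bernstein n j (x $ i))"

definition bern_mass :: "nat \<Rightarrow> real mat" where
  "bern_mass n = mat (n+1) (n+1) (\<lambda>(i,j). integral {0..1} (\<lambda>t. bernstein n i t * bernstein n j t))"

definition norm2_vec :: "real vec \<Rightarrow> real" where
  "norm2_vec y = sqrt (y \<bullet> y)"

definition normM_vec :: "nat \<Rightarrow> real vec \<Rightarrow> real" where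
  "normM_vec n y = sqrt (y \<bullet> (bern_mass n *\<^sub>v y))"

definition opnorm_M2 :: "nat \<Rightarrow> real mat \<Rightarrow> real" where
  "opnorm_M2 n A = Sup {norm2_vec (A *\<^sub>v y) / normM_vec n y | y. y \<in> carrier_vec (n+1) \<and> y \<noteq> 0\<^sub>v (n+1)}"

definition opnorm_2M :: "nat \<Rightarrow> real mat \<Rightarrow> real" where
  "opnorm_2M n A = Sup {normM_vec n (A *\<^sub>v y) / norm2_vec y | y. y \<in> carrier_vec (n+1) \<and> y \<noteq> 0\<^sub>v (n+1)}"

definition mat_inv :: "real mat \<Rightarrow> real mat" where
  "mat_inv A = the (mat_inverse A)"

definition kappa_M2 :: "nat \<Rightarrow> real mat \<Rightarrow> real" where
  "kappa_M2 n A = opnorm_M2 n A * opnorm_2M n (mat_inv A)"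

definition lagrange :: "nat \<Rightarrow> real vec \<Rightarrow> nat \<Rightarrow> real \<Rightarrow> real" where
  "lagrange n x j t = (\<Prod>i\<in>{0..n} - {j}. (t - x $ i) / (x $ j - x $ i))"

definition lagrange_weights :: "nat \<Rightarrow> real vec \<Rightarrow> real vec" where
  "lagrange_weights n x = vec (n+1) (\<lambda>j. sqrt (integral {0..1} (\<lambda>t. (lagrange n x j t)\<^sup>2)))"

end

theory Submission
  imports Defs "Jordan_Normal_Form.Determinant"
begin


lemma alt_sum_shift:
  fixes f :: "nat \<Rightarrow> real"
  shows "(\<Sum>k\<le>Suc N. (-1)^k * real (Suc N choose k) * f k)
       = (\<Sum>k\<le>N. (-1)^k * real (N choose k) * (f k - f (Suc k)))"
proof -
  let ?h = "\<lambda>k. (-1)^k * real (N choose k) * f k"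
  have A: "(\<Sum>k\<le>Suc N. (-1)^k * real (Suc N choose k) * f k)
     = f 0 + (\<Sum>k\<le>N. (-1)^(Suc k) * real (Suc N choose Suc k) * f (Suc k))"
    by (subst sum.atMost_Suc_shift) simp
  have B: "(\<Sum>k\<le>N. (-1)^(Suc k) * real (Suc N choose Suc k) * f (Suc k))
      = - (\<Sum>k\<le>N. (-1)^k * real (N choose k) * f (Suc k)) - (\<Sum>k\<le>N. (-1)^k * real (N choose Suc k) * f (Suc k))"
    by (simp add: sum_negf[symmetric] sum_subtractf[symmetric] algebra_simps)
  have C: "(\<Sum>k\<le>N. ?h k) = (\<Sum>k\<le>Suc N. ?h k)" by simp
  also have "\<dots> = ?h 0 + (\<Sum>k\<le>N. ?h (Suc k))" by (rule sum.atMost_Suc_shift)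
  also have "\<dots> = f 0 - (\<Sum>k\<le>N. (-1)^k * real (N choose Suc k) * f (Suc k))"
    by (simp add: sum_negf[symmetric])
  finally have C': "(\<Sum>k\<le>N. (-1)^k * real (N choose Suc k) * f (Suc k)) = f 0 - (\<Sum>k\<le>N. ?h k)" by simp
  show ?thesis unfolding A B C'
    by (simp add: sum_subtractf algebra_simps)
qed

definition Dp :: "real poly \<Rightarrow> real poly" where "Dp p = p - pcompose p [:1,1:]"

lemma Dp_degree:
  assumes "degree p \<le> Suc d" shows "degree (Dp p) \<le> d"
proof (rule degree_le, intro allI impI)
  fix i assume i: "d < i"
  have dc: "degree (pcompose p [:1,1:]) = degree p" by (simp add: degree_pcompose)
  show "coeff (Dp p) i = 0"
  proof (cases "i = Suc d")
    case True
    show ?thesis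
    proof (cases "degree p = Suc d")
      case True2: True
      have "lead_coeff (pcompose p [:1,1:]) = lead_coeff p"
        by (subst lead_coeff_comp) auto
      then show ?thesis using True True2 dc by (simp add: Dp_def)
    next
      case False
      then have "degree p < i" using assms True by simp
      then show ?thesis using dc by (simp add: Dp_def coeff_eq_0)
    qed
  next
    case False
    then have "degree p < i" using assms i by simp
    then show ?thesis using dc by (simp add: Dp_def coeff_eq_0)
  qed
qed

lemma poly_Dp: "poly (Dp p) x = poly p x - poly p (x + 1)"
  by (simp add: Dp_def poly_pcompose algebra_simps)

lemma fin_diff_poly:
  "\<forall>p::real poly. degree p < N \<longrightarrow> (\<Sum>k\<le>N. (-1)^k * real (N choose k) * poly p (real k)) = 0"
proof (induction N)
  case 0 then show ?case by simp
next
  case (Suc N)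
  show ?case
  proof (intro allI impI)
    fix p :: "real poly" assume dp: "degree p < Suc N"
    have "(\<Sum>k\<le>Suc N. (-1)^k * real (Suc N choose k) * poly p (real k))
        = (\<Sum>k\<le>N. (-1)^k * real (N choose k) * (poly p (real k) - poly p (real (Suc k))))"
      by (rule alt_sum_shift)
    also have "\<dots> = (\<Sum>k\<le>N. (-1)^k * real (N choose k) * poly (Dp p) (real k))"
      by (simp add: poly_Dp add.commute)
    also have "\<dots> = 0"
    proof (cases N)
      case 0
      then have "degree p = 0" using dp by simp
      then have "poly p x = coeff p 0" for x by (simp add: poly_altdef)
      then show ?thesis using 0 by (simp add: poly_Dp add.commute)
    next
      case (Suc M)
      have "degree (Dp p) \<le> M" using dp Suc by (intro Dp_degree) simp
      then have "degree (Dp p) < N" using Suc by simp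
      then show ?thesis using Suc.IH by blast
    qed
    finally show "(\<Sum>k\<le>Suc N. (-1)^k * real (Suc N choose k) * poly p (real k)) = 0" .
  qed
qed

lemma fact_binom_prod: "real (n + k choose n) * fact n = (\<Prod>i\<in>{1..n}. real k + real i)"
proof (induction n)
  case 0 then show ?case by simp
next
  case (Suc n)
  have e: "real (Suc n + k choose Suc n) * real (Suc n) = real (n + k choose n) * (real n + real k + 1)"
  proof -
    have "(Suc n + k choose Suc n) * Suc n = (n + k choose n) * (Suc (n + k))"
      using Suc_times_binomial_eq[of "n+k" n] by (simp add: mult.commute)
    then have "real ((Suc n + k choose Suc n) * Suc n) = real ((n + k choose n) * (Suc (n + k)))" by (simp only:)
    then show ?thesis by (simp del: binomial_Suc_Suc add: algebra_simps)
  qed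
  have "real (Suc n + k choose Suc n) * fact (Suc n) = (real (Suc n + k choose Suc n) * real (Suc n)) * fact n"
    by (simp add: algebra_simps)
  also have "\<dots> = (real (n + k choose n) * fact n) * (real n + real k + 1)" unfolding e by (simp add: algebra_simps)
  also have "\<dots> = (\<Prod>i\<in>{1..Suc n}. real k + real i)"
    using Suc.IH by (simp add: prod.nat_ivl_Suc' algebra_simps)
  finally show ?case .
qed

definition cc :: "nat \<Rightarrow> nat \<Rightarrow> real" where
  "cc n i = (-1)^i * real (i+1) * real (n+i+1 choose n) * real (n+1 choose (i+1))"

definition Pm :: "nat \<Rightarrow> nat \<Rightarrow> real poly" where
  "Pm n m = Polynomial.smult (1 / fact n) (if m = 0 then (\<Prod>i\<in>{1..n}. [:real i, 1:])
        else [:0,1:] * (\<Prod>i\<in>{1..n}-{m}. [:real i, 1:]))"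

lemma Pm_degree: assumes "m \<le> n" shows "degree (Pm n m) \<le> n"
proof -
  have d1: "degree (\<Prod>i\<in>A. [:real i, 1:]) \<le> card A" if "finite A" for A :: "nat set"
  proof -
    have "degree (\<Prod>i\<in>A. [:real i, 1:]) \<le> (\<Sum>i\<in>A. degree [:real i, 1:])"
      using degree_prod_sum_le[OF that, of "\<lambda>i. [:real i, 1:]"] by (simp add: o_def)
    also have "\<dots> = card A" by simp
    finally show ?thesis .
  qed
  show ?thesis
  proof (cases "m = 0")
    case True then show ?thesis using d1[of "{1..n}"] by (simp add: Pm_def)
  next
    case False
    have "degree ([:0,1:] * (\<Prod>i\<in>{1..n}-{m}. [:real i, 1:])) \<le> 1 + card ({1..n}-{m})"
      using degree_mult_le[of "[:0,1::real:]" "(\<Prod>i\<in>{1..n}-{m}. [:real i, 1:])"] d1[of "{1..n}-{m}"]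
      by simp
    also have "\<dots> \<le> n"
    proof (cases "m \<in> {1..n}")
      case True then show ?thesis by (simp add: card_Diff_singleton)
    next
      case False then show ?thesis using \<open>m \<noteq> 0\<close> assms by auto
    qed
    finally show ?thesis using False by (simp add: Pm_def)
  qed
qed

lemma poly_Pm: "poly (Pm n m) x = (1 / fact n) * (if m = 0 then (\<Prod>i\<in>{1..n}. x + real i)
        else x * (\<Prod>i\<in>{1..n}-{m}. x + real i))"
  by (simp add: Pm_def poly_prod add.commute)

lemma Pm_0: "poly (Pm n m) 0 = (if m = 0 then 1 else 0)"
  using fact_binom_prod[of n 0] by (simp add: poly_Pm)

lemma Pm_pos: assumes "m \<le> n" "k > 0"
  shows "poly (Pm n m) (real k) = real k * real (n + k choose n) / (real m + real k)"
proof (cases "m = 0")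
  case True then show ?thesis using fact_binom_prod[of n k] assms
    by (simp add: poly_Pm field_simps)
next
  case False
  then have mi: "m \<in> {1..n}" using assms by auto
  have "(\<Prod>i\<in>{1..n}. real k + real i) = (real k + real m) * (\<Prod>i\<in>{1..n}-{m}. real k + real i)"
    using prod.remove[OF _ mi, of "\<lambda>i. real k + real i"] by simp
  then have "real (n + k choose n) * fact n = (real k + real m) * (\<Prod>i\<in>{1..n}-{m}. real k + real i)"
    using fact_binom_prod[of n k] by simp
  then have "(\<Prod>i\<in>{1..n}-{m}. real k + real i) = real (n + k choose n) * fact n / (real k + real m)"
    using assms by (simp add: field_simps)
  then show ?thesis using False assms by (simp add: poly_Pm add.commute)
qed

lemma moment_identity: assumes "m \<le> n"
  shows "(\<Sum>i\<le>n. cc n i / (real m + real i + 1)) = (if m = 0 then 1 else 0)"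
proof -
  let ?P = "Pm n m"
  have "(\<Sum>i\<le>n. cc n i / (real m + real i + 1))
      = (\<Sum>i\<le>n. (-1)^i * real (Suc n choose Suc i) * poly ?P (real (Suc i)))"
  proof (rule sum.cong[OF refl])
    fix i assume "i \<in> {..n}"
    show "cc n i / (real m + real i + 1) = (-1)^i * real (Suc n choose Suc i) * poly ?P (real (Suc i))"
      using Pm_pos[OF assms, of "Suc i"] by (simp add: cc_def field_simps)
  qed
  also have "\<dots> = poly ?P 0"
  proof -
    have "degree ?P < Suc n" using Pm_degree[OF assms] by simp
    then have "(\<Sum>k\<le>Suc n. (-1)^k * real (Suc n choose k) * poly ?P (real k)) = 0"
      using fin_diff_poly by blast
    moreover have "(\<Sum>k\<le>Suc n. (-1)^k * real (Suc n choose k) * poly ?P (real k))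
        = poly ?P 0 - (\<Sum>i\<le>n. (-1)^i * real (Suc n choose Suc i) * poly ?P (real (Suc i)))"
      by (subst sum.atMost_Suc_shift) (simp add: sum_negf[symmetric])
    ultimately show ?thesis by simp
  qed
  finally show ?thesis by (simp add: Pm_0)
qed

lemma hi_pow: "((\<lambda>t::real. t^k) has_integral 1 / (real k + 1)) {0..1}"
proof -
  have "((\<lambda>t::real. t^k) has_integral ((\<lambda>t. t^(k+1) / (real k + 1)) 1 - (\<lambda>t. t^(k+1) / (real k + 1)) 0)) {0..1}"
  proof (rule fundamental_theorem_of_calculus)
    fix x :: real assume "x \<in> {0..1}"
    have d: "((\<lambda>t. t^(k+1)) has_real_derivative real (k+1) * x^k) (at x)"
      using DERIV_pow[of "k+1" x] by simp
    have "((\<lambda>t. t^(k+1) / (real k + 1)) has_real_derivative real (k+1) * x^k / (real k + 1)) (at x within {0..1})"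
      using DERIV_cdivide[OF d, of "real k + 1"] has_field_derivative_at_within by blast
    moreover have eqk: "real (k+1) * x^k / (real k + 1) = x^k" by (simp add: add.commute)
    ultimately have "((\<lambda>t. t^(k+1) / (real k + 1)) has_real_derivative x^k) (at x within {0..1})"
      by metis
    then show "((\<lambda>t. t^(k+1) / (real k + 1)) has_vector_derivative x^k) (at x within {0..1})"
      by (simp add: has_real_derivative_iff_has_vector_derivative)
  qed simp
  then show ?thesis by simp
qed

definition rr :: "nat \<Rightarrow> real \<Rightarrow> real" where "rr n t = (\<Sum>i\<le>n. cc n i * t^i)"

lemma moment_integral:
  "((\<lambda>t. (\<Sum>j\<le>n. a j * t^j) * rr n t) has_integral a 0) {0..1}"
proof -
  have eq: "(\<Sum>j\<le>n. a j * t^j) * rr n t = (\<Sum>j\<le>n. a j * (\<Sum>i\<le>n. cc n i * t^(j+i)))" for t :: real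
  proof -
    have "(\<Sum>j\<le>n. a j * t^j) * rr n t = (\<Sum>j\<le>n. \<Sum>i\<le>n. a j * t^j * (cc n i * t^i))"
      by (simp add: rr_def sum_product)
    also have "\<dots> = (\<Sum>j\<le>n. a j * (\<Sum>i\<le>n. cc n i * t^(j+i)))"
      unfolding sum_distrib_left by (intro sum.cong refl) (simp add: power_add algebra_simps)
    finally show ?thesis .
  qed
  have "((\<lambda>t. \<Sum>j\<le>n. a j * (\<Sum>i\<le>n. cc n i * t^(j+i))) has_integral
        (\<Sum>j\<le>n. a j * (\<Sum>i\<le>n. cc n i * (1 / (real (j+i) + 1))))) {0..1}"
    by (intro has_integral_sum has_integral_mult_right hi_pow) auto
  also have "(\<Sum>j\<le>n. a j * (\<Sum>i\<le>n. cc n i * (1 / (real (j+i) + 1)))) = (\<Sum>j\<le>n. a j * (if j = 0 then 1 else 0))"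
  proof (rule sum.cong[OF refl])
    fix j assume "j \<in> {..n}"
    then have "(\<Sum>i\<le>n. cc n i / (real j + real i + 1)) = (if j = 0 then 1 else 0)"
      by (intro moment_identity) auto
    then show "a j * (\<Sum>i\<le>n. cc n i * (1 / (real (j+i) + 1))) = a j * (if j = 0 then 1 else 0)"
      by (simp add: add.assoc)
  qed
  also have "\<dots> = a 0" by (simp add: if_distrib cong: if_cong)
  finally show ?thesis unfolding eq .
qed

lemma poly_sum_n: fixes q :: "real poly" assumes "degree q \<le> n" shows "poly q t = (\<Sum>j\<le>n. coeff q j * t^j)"
proof -
  have "poly q t = (\<Sum>j\<le>degree q. coeff q j * t^j)" by (rule poly_altdef)
  also have "\<dots> = (\<Sum>j\<le>n. coeff q j * t^j)"
    by (rule sum.mono_neutral_left) (use assms in \<open>auto simp: coeff_eq_0\<close>)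
  finally show ?thesis .
qed

lemma cc0: "cc n 0 = (real n + 1)^2"
  by (simp add: cc_def power2_eq_square add.commute)

lemma cont_rr: "continuous_on S (rr n)"
  unfolding rr_def by (intro continuous_intros)

lemma endpoint_ineq:
  assumes "degree q \<le> n"
  shows "(poly q 0)^2 \<le> (real n + 1)^2 * integral {0..1} (\<lambda>t. (poly q t)^2)"
proof -
  define I where "I = integral {0..1} (\<lambda>t. (poly q t)^2)"
  define l where "l = poly q 0 / (real n + 1)^2"
  have hq: "((\<lambda>t. (poly q t)^2) has_integral I) {0..1}"
    unfolding I_def by (intro integrable_integral integrable_continuous_interval continuous_intros)
  have hqr: "((\<lambda>t. poly q t * rr n t) has_integral poly q 0) {0..1}"
    using moment_integral[where n=n and a="coeff q"] by (simp add: poly_sum_n[OF assms, symmetric] poly_0_coeff_0)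
  have hrr: "((\<lambda>t. rr n t * rr n t) has_integral (real n + 1)^2) {0..1}"
    using moment_integral[where n=n and a="cc n"] by (simp add: rr_def[symmetric] cc0)
  have "((\<lambda>t. (poly q t)^2 - 2 * l * (poly q t * rr n t) + l^2 * (rr n t * rr n t)) has_integral
        (I - 2 * l * poly q 0 + l^2 * (real n + 1)^2)) {0..1}"
    by (intro has_integral_add has_integral_diff has_integral_mult_right hq hqr hrr)
  moreover have "(poly q t)^2 - 2 * l * (poly q t * rr n t) + l^2 * (rr n t * rr n t) = (poly q t - l * rr n t)^2" for t
    by (simp add: power2_eq_square algebra_simps)
  ultimately have "((\<lambda>t. (poly q t - l * rr n t)^2) has_integral
        (I - 2 * l * poly q 0 + l^2 * (real n + 1)^2)) {0..1}" by simp
  then have "0 \<le> I - 2 * l * poly q 0 + l^2 * (real n + 1)^2"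
    by (rule has_integral_nonneg) simp
  also have "I - 2 * l * poly q 0 + l^2 * (real n + 1)^2 = I - (poly q 0)^2 / (real n + 1)^2"
  proof -
    have s: "(real n + 1)^2 \<noteq> 0" by simp
    have "l^2 * (real n + 1)^2 = (poly q 0)^2 / (real n + 1)^2"
      unfolding l_def using s by (simp add: power2_eq_square)
    moreover have "2 * l * poly q 0 = 2 * (poly q 0)^2 / (real n + 1)^2"
      unfolding l_def by (simp add: power2_eq_square)
    ultimately show ?thesis by simp
  qed
  finally have "(poly q 0)^2 / (real n + 1)^2 \<le> I" by simp
  then show ?thesis unfolding I_def by (simp add: field_simps)
qed

lemma int_sq_nonneg: "0 \<le> integral {a..b} (\<lambda>t. (poly q t)^2)" for q :: "real poly"
  by (intro integral_nonneg integrable_continuous_interval continuous_intros) auto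

lemma left_ineq:
  fixes q :: "real poly"
  assumes "degree q \<le> n" "a \<le> b"
  shows "(poly q a)^2 * (b - a) \<le> (real n + 1)^2 * integral {a..b} (\<lambda>t. (poly q t)^2)"
proof (cases "a = b")
  case True then show ?thesis using int_sq_nonneg[of a b q] by simp
next
  case False
  define L where "L = b - a"
  have L: "L > 0" using False assms unfolding L_def by simp
  define Q where "Q = pcompose q [:a, L:]"
  have dQ: "degree Q \<le> n"
    unfolding Q_def using degree_pcompose_le[of q "[:a, L:]"] assms(1) L by simp
  have pQ: "poly Q s = poly q (L * s + a)" for s unfolding Q_def by (simp add: poly_pcompose algebra_simps)
  define I where "I = integral {a..b} (\<lambda>t. (poly q t)^2)"
  have hI: "((\<lambda>t. (poly q t)^2) has_integral I) (cbox a b)"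
    unfolding I_def box_real by (intro integrable_integral integrable_continuous_interval continuous_intros)
  from has_integral_affinity'[OF hI L, of a]
  have "((\<lambda>s. (poly Q s)^2) has_integral I / L) {0..1}"
    using L by (simp add: pQ L_def box_real divide_inverse mult.commute)
  then have "integral {0..1} (\<lambda>s. (poly Q s)^2) = I / L" by (rule integral_unique)
  moreover have "(poly Q 0)^2 \<le> (real n + 1)^2 * integral {0..1} (\<lambda>s. (poly Q s)^2)"
    by (rule endpoint_ineq[OF dQ])
  moreover have "poly Q 0 = poly q a" by (simp add: pQ)
  ultimately have "(poly q a)^2 \<le> (real n + 1)^2 * (I / L)" by simp
  then have "(poly q a)^2 * L \<le> (real n + 1)^2 * I" using L by (simp add: field_simps)
  then show ?thesis unfolding L_def I_def .
qed

lemma right_ineq: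
  fixes q :: "real poly"
  assumes "degree q \<le> n" "a \<le> b"
  shows "(poly q b)^2 * (b - a) \<le> (real n + 1)^2 * integral {a..b} (\<lambda>t. (poly q t)^2)"
proof -
  define Q where "Q = pcompose q [:0, -1:]"
  have dQ: "degree Q \<le> n"
    unfolding Q_def using degree_pcompose_le[of q "[:0, -1:]"] assms(1) by simp
  have pQ: "poly Q s = poly q (- s)" for s unfolding Q_def by (simp add: poly_pcompose)
  have "(poly Q (-b))^2 * (-a - -b) \<le> (real n + 1)^2 * integral {-b..-a} (\<lambda>t. (poly Q t)^2)"
    by (rule left_ineq[OF dQ]) (use assms in simp)
  also have "integral {-b..-a} (\<lambda>t. (poly Q t)^2) = integral {a..b} (\<lambda>t. (poly q t)^2)"
    unfolding pQ using Henstock_Kurzweil_Integration.integral_reflect_real[of b a "\<lambda>t. (poly q t)^2"] by simp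
  finally show ?thesis by (simp add: pQ)
qed

lemma nikolskii:
  fixes q :: "real poly"
  assumes "degree q \<le> n" "0 \<le> x" "x \<le> 1"
  shows "(poly q x)^2 \<le> (real n + 1)^2 * integral {0..1} (\<lambda>t. (poly q t)^2)"
proof -
  have 1: "(poly q x)^2 * (x - 0) \<le> (real n + 1)^2 * integral {0..x} (\<lambda>t. (poly q t)^2)"
    by (rule right_ineq) (use assms in auto)
  have 2: "(poly q x)^2 * (1 - x) \<le> (real n + 1)^2 * integral {x..1} (\<lambda>t. (poly q t)^2)"
    by (rule left_ineq) (use assms in auto)
  have "integral {0..x} (\<lambda>t. (poly q t)^2) + integral {x..1} (\<lambda>t. (poly q t)^2) = integral {0..1} (\<lambda>t. (poly q t)^2)"
    by (rule Henstock_Kurzweil_Integration.integral_combine) (use assms in \<open>auto intro!: integrable_continuous_interval continuous_intros\<close>)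
  with 1 2 show ?thesis by (simp add: algebra_simps) (smt (verit) distrib_left)
qed

definition bpoly :: "nat \<Rightarrow> nat \<Rightarrow> real poly" where
  "bpoly n j = Polynomial.smult (real (n choose j)) ([:0,1:]^j * [:1,-1:]^(n-j))"

lemma poly_bpoly: "poly (bpoly n j) t = bernstein n j t"
  by (simp add: bpoly_def bernstein_def)

lemma degree_bpoly: "j \<le> n \<Longrightarrow> degree (bpoly n j) \<le> n"
proof -
  assume j: "j \<le> n"
  have "degree ([:0,1::real:]^j * [:1,-1:]^(n-j)) \<le> degree ([:0,1::real:]^j) + degree ([:1,-1::real:]^(n-j))"
    by (rule degree_mult_le)
  also have "\<dots> \<le> j + (n - j)"
    using degree_power_le[of "[:0,1::real:]" j] degree_power_le[of "[:1,-1::real:]" "n-j"] by simp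
  finally have "degree ([:0,1::real:]^j * [:1,-1:]^(n-j)) \<le> n" using j by simp
  then show ?thesis unfolding bpoly_def using degree_smult_le order_trans by blast
qed

definition pvec :: "nat \<Rightarrow> real vec \<Rightarrow> real poly" where
  "pvec n y = (\<Sum>j\<in>{0..<n+1}. Polynomial.smult (y $ j) (bpoly n j))"

lemma poly_pvec: "poly (pvec n y) t = (\<Sum>j\<in>{0..<n+1}. y $ j * bernstein n j t)"
  by (simp add: pvec_def poly_sum poly_bpoly)

lemma degree_pvec: "degree (pvec n y) \<le> n"
  unfolding pvec_def
proof (rule degree_sum_le)
  fix j assume "j \<in> {0..<n+1}"
  then show "degree (Polynomial.smult (y $ j) (bpoly n j)) \<le> n"
    using degree_bpoly[of j n] degree_smult_le[of "y $ j" "bpoly n j"] by simp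
qed simp

lemma cont_bern: "continuous_on S (bernstein n j)"
  unfolding bernstein_def by (intro continuous_intros)

lemma normM_sq:
  assumes y: "y \<in> carrier_vec (n+1)"
  shows "y \<bullet> (bern_mass n *\<^sub>v y) = integral {0..1} (\<lambda>t. (poly (pvec n y) t)^2)"
proof -
  have dy: "dim_vec y = n+1" using y by simp
  have "y \<bullet> (bern_mass n *\<^sub>v y) = (\<Sum>i\<in>{0..<n+1}. y $ i * (\<Sum>j\<in>{0..<n+1}.
        integral {0..1} (\<lambda>t. bernstein n i t * bernstein n j t) * y $ j))"
    unfolding scalar_prod_def
    by (simp add: bern_mass_def dy scalar_prod_def row_def)
  also have "\<dots> = (\<Sum>i\<in>{0..<n+1}. \<Sum>j\<in>{0..<n+1}. (y $ i * y $ j) *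
        integral {0..1} (\<lambda>t. bernstein n i t * bernstein n j t))"
    by (simp add: sum_distrib_left algebra_simps)
  also have "\<dots> = integral {0..1} (\<lambda>t. (poly (pvec n y) t)^2)"
  proof (rule sym, rule integral_unique)
    have "((\<lambda>t. \<Sum>i\<in>{0..<n+1}. \<Sum>j\<in>{0..<n+1}. (y $ i * y $ j) * (bernstein n i t * bernstein n j t)) has_integral
       (\<Sum>i\<in>{0..<n+1}. \<Sum>j\<in>{0..<n+1}. (y $ i * y $ j) *
        integral {0..1} (\<lambda>t. bernstein n i t * bernstein n j t))) {0..1}"
      by (intro has_integral_sum has_integral_mult_right integrable_integral
          integrable_continuous_interval continuous_intros cont_bern) auto
    moreover have "(\<Sum>i\<in>{0..<n+1}. \<Sum>j\<in>{0..<n+1}. (y $ i * y $ j) * (bernstein n i t * bernstein n j t))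
        = (poly (pvec n y) t)^2" for t
    proof -
      have "(poly (pvec n y) t)^2 = (\<Sum>i\<in>{0..<n+1}. y $ i * bernstein n i t) * (\<Sum>j\<in>{0..<n+1}. y $ j * bernstein n j t)"
        by (simp only: poly_pvec power2_eq_square)
      also have "\<dots> = (\<Sum>i\<in>{0..<n+1}. \<Sum>j\<in>{0..<n+1}. (y $ i * bernstein n i t) * (y $ j * bernstein n j t))"
        by (rule sum_product)
      also have "\<dots> = (\<Sum>i\<in>{0..<n+1}. \<Sum>j\<in>{0..<n+1}. (y $ i * y $ j) * (bernstein n i t * bernstein n j t))"
        by (intro sum.cong refl) (simp add: algebra_simps)
      finally show ?thesis by simp
    qed
    ultimately show "((\<lambda>t. (poly (pvec n y) t)^2) has_integral
       (\<Sum>i\<in>{0..<n+1}. \<Sum>j\<in>{0..<n+1}. (y $ i * y $ j) *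
        integral {0..1} (\<lambda>t. bernstein n i t * bernstein n j t))) {0..1}" by simp
  qed
  finally show ?thesis .
qed

lemma V_mult:
  assumes y: "y \<in> carrier_vec (n+1)" and i: "i < n+1"
  shows "(bern_vandermonde n x *\<^sub>v y) $ i = poly (pvec n y) (x $ i)"
  using y i by (simp add: bern_vandermonde_def scalar_prod_def row_def poly_pvec mult.commute)

lemma dim_V_mult: "dim_vec (bern_vandermonde n x *\<^sub>v y) = n+1"
  by (simp add: bern_vandermonde_def)





lemma nodes_in:
  fixes x :: "real vec"
  assumes "0 \<le> x $ 0" and "x $ n \<le> 1"
    and mono: "\<And>i j. i < j \<Longrightarrow> j \<le> n \<Longrightarrow> x $ i < x $ j" and i: "i \<le> n"
  shows "0 \<le> x $ i \<and> x $ i \<le> 1"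
proof -
  have "x $ 0 \<le> x $ i" using mono[of 0 i] i by (cases "i = 0") auto
  moreover have "x $ i \<le> x $ n" using mono[of i n] i by (cases "i = n") auto
  ultimately show ?thesis using assms by simp
qed

lemma powr32: "(real n + 1) powr (3/2) = sqrt ((real n + 1)^3)"
  by (simp add: powr_half_sqrt_powr)

lemma normM_eq: "y \<in> carrier_vec (n+1) \<Longrightarrow> normM_vec n y = sqrt (integral {0..1} (\<lambda>t. (poly (pvec n y) t)^2))"
  by (simp add: normM_vec_def normM_sq)

lemma opM2_bound:
  fixes x :: "real vec"
  assumes "0 \<le> x $ 0" and "x $ n \<le> 1"
    and mono: "\<And>i j. i < j \<Longrightarrow> j \<le> n \<Longrightarrow> x $ i < x $ j"
  shows "opnorm_M2 n (bern_vandermonde n x) \<le> (real n + 1) powr (3/2)"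
  unfolding opnorm_M2_def
proof (rule cSup_least)
  let ?S = "{norm2_vec (bern_vandermonde n x *\<^sub>v y) / normM_vec n y |y. y \<in> carrier_vec (n + 1) \<and> y \<noteq> 0\<^sub>v (n + 1)}"
  let ?u = "unit_vec (n+1) 0"
  have "norm2_vec (bern_vandermonde n x *\<^sub>v ?u) / normM_vec n ?u \<in> ?S"
    unfolding mem_Collect_eq by (rule exI[of _ ?u]) (simp add: unit_vec_nonzero)
  then show "?S \<noteq> {}" by blast
next
  fix r assume "r \<in> {norm2_vec (bern_vandermonde n x *\<^sub>v y) / normM_vec n y |y. y \<in> carrier_vec (n + 1) \<and> y \<noteq> 0\<^sub>v (n + 1)}"
  then obtain y where y: "y \<in> carrier_vec (n+1)" and r: "r = norm2_vec (bern_vandermonde n x *\<^sub>v y) / normM_vec n y"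
    by blast
  define I where "I = integral {0..1} (\<lambda>t. (poly (pvec n y) t)^2)"
  have I0: "0 \<le> I" unfolding I_def by (rule int_sq_nonneg)
  have "(bern_vandermonde n x *\<^sub>v y) \<bullet> (bern_vandermonde n x *\<^sub>v y) = (\<Sum>i\<in>{0..<n+1}. (poly (pvec n y) (x $ i))^2)"
    unfolding scalar_prod_def dim_V_mult using y by (intro sum.cong refl) (simp add: V_mult power2_eq_square)
  also have "\<dots> \<le> (\<Sum>i\<in>{0..<n+1}. (real n + 1)^2 * I)"
  proof (rule sum_mono)
    fix i assume "i \<in> {0..<n+1}"
    then have "i \<le> n" by simp
    from nodes_in[OF assms(1,2) mono this] have xi: "0 \<le> x $ i" "x $ i \<le> 1" by auto
    show "(poly (pvec n y) (x $ i))^2 \<le> (real n + 1)^2 * I"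
      unfolding I_def by (rule nikolskii[OF degree_pvec xi])
  qed
  also have "\<dots> = (real n + 1)^3 * I" by (simp add: power3_eq_cube power2_eq_square)
  finally have "norm2_vec (bern_vandermonde n x *\<^sub>v y) \<le> sqrt ((real n + 1)^3 * I)"
    unfolding norm2_vec_def by simp
  also have "\<dots> = (real n + 1) powr (3/2) * normM_vec n y"
    using y by (simp add: powr32 normM_eq I_def real_sqrt_mult)
  finally have le: "norm2_vec (bern_vandermonde n x *\<^sub>v y) \<le> (real n + 1) powr (3/2) * normM_vec n y" .
  show "r \<le> (real n + 1) powr (3/2)"
  proof (cases "normM_vec n y = 0")
    case True then show ?thesis using r by simp
  next
    case False
    have "normM_vec n y = sqrt I" using y by (simp add: normM_eq I_def)
    then have "normM_vec n y > 0" using False I0 by simp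
    then show ?thesis using r le by (simp add: divide_le_eq)
  qed
qed



lemma bern_subst:
  fixes s :: real assumes s: "s \<ge> 0" and j: "j \<le> n"
  shows "bernstein n j (s / (1 + s)) * (1 + s)^n = real (n choose j) * s^j"
proof -
  have s1: "1 + s > 0" using s by simp
  have "1 - s / (1 + s) = 1 / (1 + s)" using s1 by (simp add: field_simps)
  then have "bernstein n j (s / (1 + s)) = real (n choose j) * (s^j / (1+s)^j) * (1 / (1+s)^(n-j))"
    by (simp add: bernstein_def power_divide)
  moreover have "(1 + s)^n = (1+s)^j * (1+s)^(n-j)" using j by (simp flip: power_add)
  ultimately show ?thesis using s1 by (simp add: field_simps)
qed

lemma bern_indep:
  assumes c: "c \<in> carrier_vec (n+1)" and z: "pvec n c = 0"
  shows "c = 0\<^sub>v (n+1)"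
proof -
  define Q where "Q = (\<Sum>j\<in>{0..<n+1}. monom (c $ j * real (n choose j)) j)"
  have cQ: "coeff Q k = (if k < n+1 then c $ k * real (n choose k) else 0)" for k
    unfolding Q_def by (simp add: coeff_sum coeff_monom)
  have dQ: "degree Q \<le> n"
    by (rule degree_le) (simp add: cQ)
  have pQ: "poly Q s = 0" if s: "s \<ge> 0" for s
  proof -
    have "poly Q s = (\<Sum>j\<in>{0..<n+1}. c $ j * real (n choose j) * s^j)"
      unfolding Q_def by (simp add: poly_sum poly_monom)
    also have "\<dots> = (\<Sum>j\<in>{0..<n+1}. c $ j * bernstein n j (s / (1 + s))) * (1 + s)^n"
      unfolding sum_distrib_right
      by (intro sum.cong refl) (use bern_subst[OF s] in \<open>auto simp: algebra_simps\<close>)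
    also have "\<dots> = 0" using z poly_pvec[of n c "s / (1 + s)"] by simp
    finally show ?thesis .
  qed
  have "Q = 0"
  proof (rule poly_eqI_degree[of "real ` {0..n}"])
    fix s assume "s \<in> real ` {0..n}" then show "poly Q s = poly 0 s" using pQ by auto
  next
    have "card (real ` {0..n}) = n + 1" by (subst card_image) (auto simp: inj_on_def)
    then show "degree Q < card (real ` {0..n})" "degree 0 < card (real ` {0..n})" using dQ by auto
  qed
  show ?thesis
  proof (rule eq_vecI)
    fix j assume "j < dim_vec (0\<^sub>v (n+1) :: real vec)"
    then have j: "j < n+1" by simp
    have "coeff Q j = 0" using \<open>Q = 0\<close> by simp
    then have "c $ j * real (n choose j) = 0" using cQ j by simp
    moreover have "real (n choose j) \<noteq> 0" using j by simp
    ultimately show "c $ j = 0\<^sub>v (n+1) $ j" using j by simp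
  qed (use c in simp)
qed

lemma V_carrier: "bern_vandermonde n x \<in> carrier_mat (n+1) (n+1)"
  by (simp add: bern_vandermonde_def)

lemma nodes_inj:
  fixes x :: "real vec"
  assumes mono: "\<And>i j. i < j \<Longrightarrow> j \<le> n \<Longrightarrow> x $ i < x $ j"
  shows "card ((\<lambda>i. x $ i) ` {0..n}) = n + 1"
proof -
  have "inj_on (\<lambda>i. x $ i) {0..n}"
  proof (rule inj_onI)
    fix i j assume "i \<in> {0..n}" "j \<in> {0..n}" "x $ i = x $ j"
    then show "i = j" using mono[of i j] mono[of j i] by (cases i j rule: linorder_cases) auto
  qed
  then show ?thesis by (simp add: card_image)
qed

lemma V_det:
  fixes x :: "real vec"
  assumes mono: "\<And>i j. i < j \<Longrightarrow> j \<le> n \<Longrightarrow> x $ i < x $ j"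
  shows "\<not> (\<exists>c. c \<in> carrier_vec (n+1) \<and> c \<noteq> 0\<^sub>v (n+1) \<and> bern_vandermonde n x *\<^sub>v c = 0\<^sub>v (n+1))"
proof
  assume "\<exists>c. c \<in> carrier_vec (n+1) \<and> c \<noteq> 0\<^sub>v (n+1) \<and> bern_vandermonde n x *\<^sub>v c = 0\<^sub>v (n+1)"
  then obtain c where c: "c \<in> carrier_vec (n+1)" "c \<noteq> 0\<^sub>v (n+1)" "bern_vandermonde n x *\<^sub>v c = 0\<^sub>v (n+1)"
    by blast
  have "pvec n c = 0"
  proof (rule poly_eqI_degree[of "(\<lambda>i. x $ i) ` {0..n}"])
    fix s assume "s \<in> (\<lambda>i. x $ i) ` {0..n}"
    then obtain i where i: "i \<le> n" "s = x $ i" by auto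
    have "(bern_vandermonde n x *\<^sub>v c) $ i = 0" using c(3) i by simp
    then show "poly (pvec n c) s = poly 0 s" using V_mult[OF c(1), of i] i by simp
  next
    show "degree (pvec n c) < card ((\<lambda>i. x $ i) ` {0..n})" "degree 0 < card ((\<lambda>i. x $ i) ` {0..n})"
      using nodes_inj[OF mono] degree_pvec[of n c] by auto
  qed
  then show False using bern_indep[OF c(1)] c(2) by simp
qed

lemma V_inv:
  fixes x :: "real vec"
  assumes mono: "\<And>i j. i < j \<Longrightarrow> j \<le> n \<Longrightarrow> x $ i < x $ j"
  shows "bern_vandermonde n x * mat_inv (bern_vandermonde n x) = 1\<^sub>m (n+1)"
    "mat_inv (bern_vandermonde n x) \<in> carrier_mat (n+1) (n+1)"
proof -
  let ?V = "bern_vandermonde n x"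
  have U: "?V \<in> Units (ring_mat TYPE(real) (n+1) ())"
    by (rule det_non_zero_imp_unit[OF V_carrier]) (use det_0_iff_vec_prod_zero[OF V_carrier] V_det[OF mono] in blast)
  have "mat_inverse ?V \<noteq> None"
  proof
    assume "mat_inverse ?V = None"
    from mat_inverse(1)[OF V_carrier this, where b="()"] U show False by blast
  qed
  then obtain B where B: "mat_inverse ?V = Some B" by auto
  from mat_inverse(2)[OF V_carrier B] have "?V * B = 1\<^sub>m (n+1)" "B \<in> carrier_mat (n+1) (n+1)" by auto
  moreover have "mat_inv ?V = B" using B by (simp add: mat_inv_def)
  ultimately show "?V * mat_inv ?V = 1\<^sub>m (n+1)" "mat_inv ?V \<in> carrier_mat (n+1) (n+1)" by auto
qed




lemma quad_disc:
  fixes A B C :: real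
  assumes h: "\<And>l. 0 \<le> A - 2 * l * B + l^2 * C" and C: "0 \<le> C"
  shows "B^2 \<le> A * C"
proof (cases "C = 0")
  case True
  show ?thesis
  proof (cases "B = 0")
    case True then show ?thesis using h[of 0] C by simp
  next
    case False
    have "0 \<le> A - 2 * ((A + 1) / (2 * B)) * B" using h[of "(A + 1) / (2 * B)"] \<open>C = 0\<close> by simp
    also have "\<dots> = -1" using False by (simp add: field_simps)
    finally show ?thesis by simp
  qed
next
  case False
  then have Cp: "C > 0" using C by simp
  have "0 \<le> A - 2 * (B / C) * B + (B / C)^2 * C" by (rule h)
  also have "\<dots> = A - B^2 / C" using Cp by (simp add: power2_eq_square field_simps)
  finally show ?thesis using Cp by (simp add: field_simps)
qed

lemma int_cs:
  fixes f g :: "real \<Rightarrow> real"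
  assumes f: "continuous_on {0..1} f" and g: "continuous_on {0..1} g"
  shows "\<bar>integral {0..1} (\<lambda>t. f t * g t)\<bar> \<le> sqrt (integral {0..1} (\<lambda>t. (f t)^2)) * sqrt (integral {0..1} (\<lambda>t. (g t)^2))"
proof -
  define A where "A = integral {0..1} (\<lambda>t. (f t)^2)"
  define B where "B = integral {0..1} (\<lambda>t. f t * g t)"
  define C where "C = integral {0..1} (\<lambda>t. (g t)^2)"
  have hA: "((\<lambda>t. (f t)^2) has_integral A) {0..1}" unfolding A_def
    by (intro integrable_integral integrable_continuous_interval continuous_intros f)
  have hB: "((\<lambda>t. f t * g t) has_integral B) {0..1}" unfolding B_def
    by (intro integrable_integral integrable_continuous_interval continuous_intros f g)
  have hC: "((\<lambda>t. (g t)^2) has_integral C) {0..1}" unfolding C_def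
    by (intro integrable_integral integrable_continuous_interval continuous_intros g)
  have C0: "0 \<le> C" by (rule has_integral_nonneg[OF hC]) simp
  have A0: "0 \<le> A" by (rule has_integral_nonneg[OF hA]) simp
  have "B^2 \<le> A * C"
  proof (rule quad_disc[OF _ C0])
    fix l :: real
    have "((\<lambda>t. (f t)^2 - 2 * l * (f t * g t) + l^2 * (g t)^2) has_integral (A - 2 * l * B + l^2 * C)) {0..1}"
      by (intro has_integral_add has_integral_diff has_integral_mult_right hA hB hC)
    moreover have "(f t)^2 - 2 * l * (f t * g t) + l^2 * (g t)^2 = (f t - l * g t)^2" for t
      by (simp add: power2_eq_square algebra_simps)
    ultimately have "((\<lambda>t. (f t - l * g t)^2) has_integral (A - 2 * l * B + l^2 * C)) {0..1}" by simp
    then show "0 \<le> A - 2 * l * B + l^2 * C" by (rule has_integral_nonneg) simp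
  qed
  then have "sqrt (B^2) \<le> sqrt (A * C)" by (rule real_sqrt_le_mono)
  then show ?thesis unfolding A_def[symmetric] B_def[symmetric] C_def[symmetric]
    by (simp add: real_sqrt_mult)
qed

definition lpoly :: "nat \<Rightarrow> real vec \<Rightarrow> nat \<Rightarrow> real poly" where
  "lpoly n x j = (\<Prod>i\<in>{0..n}-{j}. [:- (x $ i) / (x $ j - x $ i), 1 / (x $ j - x $ i):])"

lemma poly_lpoly: "poly (lpoly n x j) t = lagrange n x j t"
  unfolding lpoly_def lagrange_def poly_prod
  by (intro prod.cong refl) (simp add: diff_divide_distrib)

lemma degree_lpoly: assumes jn: "j \<le> n" shows "degree (lpoly n x j) \<le> n"
proof -
  define F where "F = (\<lambda>i. [:- (x $ i) / (x $ j - x $ i), 1 / (x $ j - x $ i):])"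
  have "degree (prod F ({0..n}-{j})) \<le> sum (degree \<circ> F) ({0..n}-{j})"
    by (rule degree_prod_sum_le) simp
  then have "degree (lpoly n x j) \<le> (\<Sum>i\<in>{0..n}-{j}. degree (F i))"
    by (simp only: lpoly_def F_def o_def)
  also have "\<dots> \<le> (\<Sum>i\<in>{0..n}-{j}. 1)" by (intro sum_mono) (simp add: F_def)
  also have "\<dots> \<le> n" using jn by (simp add: card_Diff_singleton)
  finally show ?thesis .
qed

lemma lagrange_node:
  fixes x :: "real vec"
  assumes mono: "\<And>i j. i < j \<Longrightarrow> j \<le> n \<Longrightarrow> x $ i < x $ j" and i: "i \<le> n" and j: "j \<le> n"
  shows "lagrange n x j (x $ i) = (if i = j then 1 else 0)"
proof (cases "i = j")
  case True
  have "x $ j \<noteq> x $ k" if "k \<in> {0..n}-{j}" for k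
    using mono[of j k] mono[of k j] that j by (cases j k rule: linorder_cases) auto
  then have "lagrange n x j (x $ j) = 1" unfolding lagrange_def by (intro prod.neutral) auto
  then show ?thesis using True by simp
next
  case False
  then have "i \<in> {0..n}-{j}" using i by auto
  then have "lagrange n x j (x $ i) = 0" unfolding lagrange_def by (intro prod_zero) (auto intro!: bexI[of _ i])
  then show ?thesis using False by simp
qed

definition Lz :: "nat \<Rightarrow> real vec \<Rightarrow> real vec \<Rightarrow> real poly" where
  "Lz n x z = (\<Sum>j\<in>{0..<n+1}. Polynomial.smult (z $ j) (lpoly n x j))"

lemma degree_Lz: "degree (Lz n x z) \<le> n"
  unfolding Lz_def
proof (rule degree_sum_le)
  fix j assume "j \<in> {0..<n+1}"
  then show "degree (Polynomial.smult (z $ j) (lpoly n x j)) \<le> n"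
    using degree_lpoly[of j n x] degree_smult_le[of "z $ j" "lpoly n x j"] by simp
qed simp

lemma poly_Lz: "poly (Lz n x z) t = (\<Sum>j\<in>{0..<n+1}. z $ j * poly (lpoly n x j) t)"
  by (simp add: Lz_def poly_sum)

lemma Lz_node:
  fixes x :: "real vec"
  assumes mono: "\<And>i j. i < j \<Longrightarrow> j \<le> n \<Longrightarrow> x $ i < x $ j" and i: "i \<le> n"
  shows "poly (Lz n x z) (x $ i) = z $ i"
proof -
  have "poly (Lz n x z) (x $ i) = (\<Sum>j\<in>{0..<n+1}. z $ j * (if i = j then 1 else 0))"
    unfolding poly_Lz poly_lpoly by (intro sum.cong refl) (use lagrange_node[OF mono i] in auto)
  also have "\<dots> = z $ i" using i by (simp add: if_distrib cong: if_cong)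
  finally show ?thesis .
qed

lemma int_Lz_sq:
  "integral {0..1} (\<lambda>t. (poly (Lz n x z) t)^2) = (\<Sum>i\<in>{0..<n+1}. \<Sum>j\<in>{0..<n+1}. (z $ i * z $ j) *
        integral {0..1} (\<lambda>t. poly (lpoly n x i) t * poly (lpoly n x j) t))"
proof (rule integral_unique)
  have "((\<lambda>t. \<Sum>i\<in>{0..<n+1}. \<Sum>j\<in>{0..<n+1}. (z $ i * z $ j) * (poly (lpoly n x i) t * poly (lpoly n x j) t)) has_integral
     (\<Sum>i\<in>{0..<n+1}. \<Sum>j\<in>{0..<n+1}. (z $ i * z $ j) *
      integral {0..1} (\<lambda>t. poly (lpoly n x i) t * poly (lpoly n x j) t))) {0..1}"
    by (intro has_integral_sum has_integral_mult_right integrable_integral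
        integrable_continuous_interval continuous_intros) auto
  moreover have "(\<Sum>i\<in>{0..<n+1}. \<Sum>j\<in>{0..<n+1}. (z $ i * z $ j) * (poly (lpoly n x i) t * poly (lpoly n x j) t))
      = (poly (Lz n x z) t)^2" for t
  proof -
    have "(poly (Lz n x z) t)^2 = (\<Sum>i\<in>{0..<n+1}. z $ i * poly (lpoly n x i) t) * (\<Sum>j\<in>{0..<n+1}. z $ j * poly (lpoly n x j) t)"
      by (simp only: poly_Lz power2_eq_square)
    also have "\<dots> = (\<Sum>i\<in>{0..<n+1}. \<Sum>j\<in>{0..<n+1}. (z $ i * poly (lpoly n x i) t) * (z $ j * poly (lpoly n x j) t))"
      by (rule sum_product)
    also have "\<dots> = (\<Sum>i\<in>{0..<n+1}. \<Sum>j\<in>{0..<n+1}. (z $ i * z $ j) * (poly (lpoly n x i) t * poly (lpoly n x j) t))"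
      by (intro sum.cong refl) (simp add: algebra_simps)
    finally show ?thesis by simp
  qed
  ultimately show "((\<lambda>t. (poly (Lz n x z) t)^2) has_integral
     (\<Sum>i\<in>{0..<n+1}. \<Sum>j\<in>{0..<n+1}. (z $ i * z $ j) *
      integral {0..1} (\<lambda>t. poly (lpoly n x i) t * poly (lpoly n x j) t))) {0..1}" by simp
qed

lemma int_Lz_bound:
  fixes x z :: "real vec"
  assumes z: "z \<in> carrier_vec (n+1)"
  shows "integral {0..1} (\<lambda>t. (poly (Lz n x z) t)^2) \<le> (z \<bullet> z) * (lagrange_weights n x \<bullet> lagrange_weights n x)"
proof -
  define w where "w = (\<lambda>i. sqrt (integral {0..1} (\<lambda>t. (poly (lpoly n x i) t)^2)))"
  have G: "\<bar>integral {0..1} (\<lambda>t. poly (lpoly n x i) t * poly (lpoly n x j) t)\<bar> \<le> w i * w j" for i j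
    unfolding w_def by (rule int_cs) (intro continuous_intros)+
  have "integral {0..1} (\<lambda>t. (poly (Lz n x z) t)^2) \<le> (\<Sum>i\<in>{0..<n+1}. \<Sum>j\<in>{0..<n+1}. (\<bar>z $ i\<bar> * w i) * (\<bar>z $ j\<bar> * w j))"
    unfolding int_Lz_sq
  proof (intro sum_mono)
    fix i j
    have "(z $ i * z $ j) * integral {0..1} (\<lambda>t. poly (lpoly n x i) t * poly (lpoly n x j) t)
        \<le> \<bar>z $ i * z $ j\<bar> * \<bar>integral {0..1} (\<lambda>t. poly (lpoly n x i) t * poly (lpoly n x j) t)\<bar>"
      by (metis abs_ge_self abs_mult)
    also have "\<dots> \<le> \<bar>z $ i * z $ j\<bar> * (w i * w j)" by (intro mult_left_mono G) simp
    finally show "(z $ i * z $ j) * integral {0..1} (\<lambda>t. poly (lpoly n x i) t * poly (lpoly n x j) t)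
        \<le> (\<bar>z $ i\<bar> * w i) * (\<bar>z $ j\<bar> * w j)" by (simp add: abs_mult algebra_simps)
  qed
  also have "\<dots> = (\<Sum>i\<in>{0..<n+1}. \<bar>z $ i\<bar> * w i)^2"
    unfolding power2_eq_square by (rule sum_product[symmetric])
  also have "\<dots> \<le> (\<Sum>i\<in>{0..<n+1}. (\<bar>z $ i\<bar>)^2) * (\<Sum>i\<in>{0..<n+1}. (w i)^2)"
    by (rule Cauchy_Schwarz_ineq_sum)
  also have "(\<Sum>i\<in>{0..<n+1}. (\<bar>z $ i\<bar>)^2) = z \<bullet> z"
    using z by (simp add: scalar_prod_def power2_eq_square)
  also have "(\<Sum>i\<in>{0..<n+1}. (w i)^2) = lagrange_weights n x \<bullet> lagrange_weights n x"
    by (simp add: scalar_prod_def lagrange_weights_def w_def poly_lpoly power2_eq_square)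
  finally show ?thesis .
qed

lemma op2M_pt:
  fixes x :: "real vec"
  assumes mono: "\<And>i j. i < j \<Longrightarrow> j \<le> n \<Longrightarrow> x $ i < x $ j" and z: "z \<in> carrier_vec (n+1)"
  shows "normM_vec n (mat_inv (bern_vandermonde n x) *\<^sub>v z) / norm2_vec z \<le> norm2_vec (lagrange_weights n x)"
proof -
  let ?V = "bern_vandermonde n x"
  let ?B = "mat_inv (bern_vandermonde n x)"
  define c where "c = ?B *\<^sub>v z"
  have B: "?V * ?B = 1\<^sub>m (n+1)" "?B \<in> carrier_mat (n+1) (n+1)" using V_inv[OF mono] by auto
  have c: "c \<in> carrier_vec (n+1)" unfolding c_def using B(2) z by simp
  have Vc: "?V *\<^sub>v c = z"
  proof -
    have "?V *\<^sub>v c = (?V * ?B) *\<^sub>v z" unfolding c_def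
      using assoc_mult_mat_vec[OF V_carrier B(2) z] by simp
    then show ?thesis using B(1) z by simp
  qed
  have pc: "pvec n c = Lz n x z"
  proof (rule poly_eqI_degree[of "(\<lambda>i. x $ i) ` {0..n}"])
    fix s assume "s \<in> (\<lambda>i. x $ i) ` {0..n}"
    then obtain i where i: "i \<le> n" "s = x $ i" by auto
    have "poly (pvec n c) (x $ i) = z $ i" using V_mult[OF c, where i=i and x=x] Vc i by simp
    then show "poly (pvec n c) s = poly (Lz n x z) s" using Lz_node[OF mono i(1)] i by simp
  next
    show "degree (pvec n c) < card ((\<lambda>i. x $ i) ` {0..n})" "degree (Lz n x z) < card ((\<lambda>i. x $ i) ` {0..n})"
      using nodes_inj[OF mono] degree_pvec[of n c] degree_Lz[of n x z] by auto
  qed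
  have "normM_vec n c = sqrt (integral {0..1} (\<lambda>t. (poly (Lz n x z) t)^2))"
    using normM_eq[OF c] pc by simp
  also have "\<dots> \<le> sqrt ((z \<bullet> z) * (lagrange_weights n x \<bullet> lagrange_weights n x))"
    by (rule real_sqrt_le_mono[OF int_Lz_bound[OF z]])
  also have "\<dots> = norm2_vec z * norm2_vec (lagrange_weights n x)"
    by (simp add: norm2_vec_def real_sqrt_mult)
  finally have le: "normM_vec n c \<le> norm2_vec z * norm2_vec (lagrange_weights n x)" .
  have w0: "0 \<le> norm2_vec (lagrange_weights n x)"
    unfolding norm2_vec_def by (simp add: scalar_prod_def sum_nonneg)
  show ?thesis
  proof (cases "norm2_vec z = 0")
    case True then show ?thesis using w0 by simp
  next
    case False
    have "0 \<le> norm2_vec z" unfolding norm2_vec_def using z by (simp add: scalar_prod_def sum_nonneg)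
    then have "norm2_vec z > 0" using False by simp
    then show ?thesis using le unfolding c_def by (simp add: divide_le_eq mult.commute)
  qed
qed

lemma op2M_bound:
  fixes x :: "real vec"
  assumes mono: "\<And>i j. i < j \<Longrightarrow> j \<le> n \<Longrightarrow> x $ i < x $ j"
  shows "opnorm_2M n (mat_inv (bern_vandermonde n x)) \<le> norm2_vec (lagrange_weights n x)"
    "0 \<le> opnorm_2M n (mat_inv (bern_vandermonde n x))"
proof -
  let ?B = "mat_inv (bern_vandermonde n x)"
  let ?S = "{normM_vec n (?B *\<^sub>v y) / norm2_vec y |y. y \<in> carrier_vec (n + 1) \<and> y \<noteq> 0\<^sub>v (n + 1)}"
  let ?u = "unit_vec (n+1) 0"
  have uS: "normM_vec n (?B *\<^sub>v ?u) / norm2_vec ?u \<in> ?S"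
    unfolding mem_Collect_eq by (rule exI[of _ ?u]) (simp add: unit_vec_nonzero)
  then have ne: "?S \<noteq> {}" by blast
  have ub: "\<And>r. r \<in> ?S \<Longrightarrow> r \<le> norm2_vec (lagrange_weights n x)"
    using op2M_pt[OF mono] by blast
  show "opnorm_2M n ?B \<le> norm2_vec (lagrange_weights n x)"
    unfolding opnorm_2M_def by (rule cSup_least[OF ne ub])
  have Bu: "?B *\<^sub>v ?u \<in> carrier_vec (n+1)" using V_inv(2)[where n=n and x=x, OF mono] by simp
  have "0 \<le> normM_vec n (?B *\<^sub>v ?u)" using normM_eq[OF Bu] int_sq_nonneg by simp
  moreover have "0 \<le> norm2_vec ?u" unfolding norm2_vec_def by (simp add: scalar_prod_def sum_nonneg)
  ultimately have "0 \<le> normM_vec n (?B *\<^sub>v ?u) / norm2_vec ?u" by simp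
  moreover have "bdd_above ?S" using ub by (rule bdd_aboveI)
  ultimately show "0 \<le> opnorm_2M n ?B"
    unfolding opnorm_2M_def using cSup_upper2[OF uS] by blast
qed

theorem theorem4p3:
  fixes n :: nat and x :: "real vec"
  assumes "x \<in> carrier_vec (n+1)"
    and "0 \<le> x $ 0" and "x $ n \<le> 1"
    and "\<And>i j. i < j \<Longrightarrow> j \<le> n \<Longrightarrow> x $ i < x $ j"
  shows "kappa_M2 n (bern_vandermonde n x)
           \<le> (real n + 1) powr (3/2) * norm2_vec (lagrange_weights n x)"
proof -
  have a: "opnorm_M2 n (bern_vandermonde n x) \<le> (real n + 1) powr (3/2)"
    by (rule opM2_bound[OF assms(2,3,4)])
  have b: "opnorm_2M n (mat_inv (bern_vandermonde n x)) \<le> norm2_vec (lagrange_weights n x)"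
    by (rule op2M_bound(1)[OF assms(4)])
  have b0: "0 \<le> opnorm_2M n (mat_inv (bern_vandermonde n x))"
    by (rule op2M_bound(2)[OF assms(4)])
  show ?thesis unfolding kappa_M2_def
    by (rule mult_mono[OF a b]) (use b0 in auto)
qed


end
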